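(* Let $\Phi:\mathbb R^+\to\mathbb R$ be non-decreasing and concave with $\Phi(x)/x\to0$ as $x\to\infty$ and $\int_{\mathbb R}e^{-\Phi(|x|)}dx<\infty$. Assume that in a neighbourhood of $+\infty$, $\Phi$ is $\mathcal C^2$ and there exists $\theta>1$ such that $\Phi^\theta$ is convex. Let $d\mu_\Phi(x)=Z_\Phi^{-1}e^{-\Phi(|x|)}dx$ on $\mathbb R$. Then, with $\Phi'$ the right derivative, $$\lim_{t\to0}\frac{J_{\mu_\Phi}(t)}{t\,\Phi'\circ\Phi^{-1}(\log\frac1t)}=1.$$ Consequently, if $\Phi(0)<\log2$, then $L_\Phi(t)=\min(t,1-t)\,\Phi'\circ\Phi^{-1}\big(\log\frac{1}{\min(t,1-t)}\big)$ is defined on $[0,1]$ and there exist $k_1,k_2>0$ such that $k_1L_\Phi(t)\le J_{\mu_\Phi}(t)\le k_2L_\Phi(t)$ for all $t\in[0,1]$.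
   Context: $F_\mu(x)=\mu((-\infty,x])$ and $J_\mu=F_\mu'\circ F_\mu^{-1}$ on $(0,1)$ (extended by $0$ at $0$ and $1$); $Z_\Phi$ is the normalizing constant. *)

theory Defs
  imports "HOL-Probability.Probability"
begin

definition Z_Phi :: "(real \<Rightarrow> real) \<Rightarrow> real" where
  "Z_Phi \<Phi> = (LINT x|lborel. exp (- \<Phi> \<bar>x\<bar>))"

definition mu_Phi :: "(real \<Rightarrow> real) \<Rightarrow> real measure" where
  "mu_Phi \<Phi> = density lborel (\<lambda>x. ennreal (exp (- \<Phi> \<bar>x\<bar>) / Z_Phi \<Phi>))"

definition J_of :: "real measure \<Rightarrow> real \<Rightarrow> real" where
  "J_of \<mu> t = (if 0 < t \<and> t < 1
      then deriv (cdf \<mu>) (inv_into UNIV (cdf \<mu>) t) else 0)"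

definition rderiv :: "(real \<Rightarrow> real) \<Rightarrow> real \<Rightarrow> real" where
  "rderiv f x = (THE D. (f has_real_derivative D) (at_right x))"

definition Phi_inv :: "(real \<Rightarrow> real) \<Rightarrow> real \<Rightarrow> real" where
  "Phi_inv \<Phi> y = inv_into {0..} \<Phi> y"

definition C2_on :: "real set \<Rightarrow> (real \<Rightarrow> real) \<Rightarrow> bool" where
  "C2_on S f \<longleftrightarrow> (\<exists>f1 f2. (\<forall>x\<in>S. (f has_real_derivative f1 x) (at x)
      \<and> (f1 has_real_derivative f2 x) (at x)) \<and> continuous_on S f2)"

definition L_Phi :: "(real \<Rightarrow> real) \<Rightarrow> real \<Rightarrow> real" where
  "L_Phi \<Phi> t = min t (1 - t) * rderiv \<Phi> (Phi_inv \<Phi> (ln (1 / min t (1 - t))))"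

end

theory Submission
  imports Defs
begin

locale phi_ctx =
  fixes \<Phi> :: "real \<Rightarrow> real"
  assumes mono: "mono_on {0..} \<Phi>" and concave: "concave_on {0..} \<Phi>"
    and integr: "integrable lborel (\<lambda>x. exp (- \<Phi> \<bar>x\<bar>))"
begin

lemma monoD: "0 \<le> x \<Longrightarrow> x \<le> y \<Longrightarrow> \<Phi> x \<le> \<Phi> y"
  using mono by (auto simp: mono_on_def)

lemma cont: "continuous_on {0<..} \<Phi>"
proof -
  have "convex_on {0<..} (\<lambda>x. - \<Phi> x)"
    using concave unfolding concave_on_def by (rule convex_on_subset) auto
  then have "continuous_on {0<..} (\<lambda>x. - (- \<Phi> x))"
    by (intro continuous_on_minus convex_on_continuous) auto
  then show ?thesis by simp
qed

lemma unbounded: "\<exists>x\<ge>0. M < \<Phi> x"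
proof (rule ccontr)
  assume "\<not> ?thesis"
  then have le: "\<And>x. x \<ge> 0 \<Longrightarrow> \<Phi> x \<le> M" by force
  have "(\<integral>\<^sup>+ x. ennreal (norm (exp (- \<Phi> \<bar>x\<bar>))) \<partial>lborel) < \<infinity>"
    using integrableD(2)[OF integr] by (simp add: less_top)
  moreover have "(\<integral>\<^sup>+ (x::real). ennreal (exp (- M)) \<partial>lborel) \<le> (\<integral>\<^sup>+ x. ennreal (norm (exp (- \<Phi> \<bar>x\<bar>))) \<partial>lborel)"
    apply (rule nn_integral_mono)
    using le by (auto intro!: ennreal_leI)
  moreover have "(\<integral>\<^sup>+ (x::real). ennreal (exp (- M)) \<partial>lborel) = \<infinity>"
    by (simp add: nn_integral_const ennreal_mult_top)
  ultimately show False by simp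
qed

lemma tendsto_top: "filterlim \<Phi> at_top at_top"
  unfolding filterlim_at_top
proof
  fix M
  obtain x0 where "x0 \<ge> 0" "M < \<Phi> x0" using unbounded by blast
  then have "M \<le> \<Phi> x" if "x \<ge> x0" for x using monoD[of x0 x] that by linarith
  then show "eventually (\<lambda>x. M \<le> \<Phi> x) at_top"
    by (intro eventually_at_top_linorderI[of x0]) auto
qed

lemma tangent:
  assumes c: "c > 0" and D: "(\<Phi> has_real_derivative D) (at c)" and x: "x \<ge> 0"
  shows "\<Phi> x \<le> \<Phi> c + D * (x - c)"
proof -
  have cv: "convex_on {0..} (\<lambda>x. - \<Phi> x)" using concave by (simp add: concave_on_def)
  have d: "((\<lambda>x. - \<Phi> x) has_real_derivative - D) (at c within {0..})"
    using has_field_derivative_at_within[OF DERIV_minus[OF D]] .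
  have ci: "c \<in> interior {0..}" using c by simp
  have "- \<Phi> x - (- \<Phi> c) \<ge> (- D) * (x - c)"
    using convex_on_imp_above_tangent[OF cv connected_Ici ci _ d] x by simp
  then show ?thesis by (simp add: algebra_simps)
qed

lemma deriv_pos:
  assumes c: "c > 0" and D: "(\<Phi> has_real_derivative D) (at c)"
  shows "D > 0"
proof (rule ccontr)
  assume "\<not> D > 0"
  obtain x where x: "x \<ge> 0" "\<Phi> c < \<Phi> x" using unbounded by blast
  have "c \<le> x"
  proof (rule ccontr)
    assume "\<not> c \<le> x"
    then have "\<Phi> x \<le> \<Phi> c" using monoD x(1) by simp
    then show False using x(2) by simp
  qed
  then have "\<Phi> x \<le> \<Phi> c + D * (x - c)" using tangent[OF c D] x by auto
  moreover have "D * (x - c) \<le> 0" using \<open>\<not> D > 0\<close> \<open>c \<le> x\<close> by (simp add: mult_nonpos_nonneg)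
  ultimately show False using x by simp
qed


lemma E_borel[measurable]: "(\<lambda>x. exp (- \<Phi> \<bar>x\<bar>)) \<in> borel_measurable borel"
  using borel_measurable_integrable[OF integr] by simp

lemma E_le: "exp (- \<Phi> \<bar>x\<bar>) \<le> exp (- \<Phi> 0)"
  using monoD[of 0 "\<bar>x\<bar>"] by simp

lemma Z_pos: "Z_Phi \<Phi> > 0"
proof -
  have "ennreal (Z_Phi \<Phi>) = (\<integral>\<^sup>+ x. ennreal (exp (- \<Phi> \<bar>x\<bar>)) \<partial>lborel)"
    unfolding Z_Phi_def by (rule nn_integral_eq_integral[symmetric]) (use integr in auto)
  also have "\<dots> \<ge> (\<integral>\<^sup>+ (x::real). ennreal (exp (- \<Phi> 1)) * indicator {0..1} x \<partial>lborel)"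
    apply (rule nn_integral_mono)
    using monoD[of _ 1] by (auto split: split_indicator intro!: ennreal_leI)
  also have "(\<integral>\<^sup>+ (x::real). ennreal (exp (- \<Phi> 1)) * indicator {0..1} x \<partial>lborel) = ennreal (exp (- \<Phi> 1))"
    by (simp add: nn_integral_cmult_indicator)
  finally have "ennreal (exp (- \<Phi> 1)) \<le> ennreal (Z_Phi \<Phi>)" .
  moreover have "exp (- \<Phi> 1) > 0" by simp
  ultimately show ?thesis
    by (metis ennreal_le_iff2 not_less order.strict_trans1 ennreal_eq_0_iff ennreal_less_zero_iff le_less_trans)
qed

lemma dens_borel[measurable]: "(\<lambda>x. ennreal (exp (- \<Phi> \<bar>x\<bar>) / Z_Phi \<Phi>)) \<in> borel_measurable borel"
  by measurable

lemma sets_mu[simp, measurable_cong]: "sets (mu_Phi \<Phi>) = sets borel"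
  by (simp add: mu_Phi_def)

lemma space_mu[simp]: "space (mu_Phi \<Phi>) = UNIV"
  by (simp add: mu_Phi_def)

lemma emeasure_mu:
  assumes [measurable]: "A \<in> sets borel"
  shows "emeasure (mu_Phi \<Phi>) A = (\<integral>\<^sup>+ x. ennreal (exp (- \<Phi> \<bar>x\<bar>) / Z_Phi \<Phi>) * indicator A x \<partial>lborel)"
  unfolding mu_Phi_def by (rule emeasure_density) auto

lemma rd: "real_distribution (mu_Phi \<Phi>)"
proof -
  have "emeasure (mu_Phi \<Phi>) UNIV = (\<integral>\<^sup>+ x. ennreal (1 / Z_Phi \<Phi>) * ennreal (exp (- \<Phi> \<bar>x\<bar>)) \<partial>lborel)"
    using Z_pos by (simp add: emeasure_mu ennreal_mult[symmetric])
  also have "\<dots> = ennreal (1 / Z_Phi \<Phi>) * (\<integral>\<^sup>+ x. ennreal (exp (- \<Phi> \<bar>x\<bar>)) \<partial>lborel)"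
    by (rule nn_integral_cmult) measurable
  also have "(\<integral>\<^sup>+ x. ennreal (exp (- \<Phi> \<bar>x\<bar>)) \<partial>lborel) = ennreal (Z_Phi \<Phi>)"
    unfolding Z_Phi_def by (rule nn_integral_eq_integral) (use integr in auto)
  also have "ennreal (1 / Z_Phi \<Phi>) * ennreal (Z_Phi \<Phi>) = 1"
    using Z_pos by (simp add: ennreal_mult[symmetric])
  finally have "emeasure (mu_Phi \<Phi>) (space (mu_Phi \<Phi>)) = 1" by simp
  then show ?thesis
    unfolding real_distribution_def real_distribution_axioms_def
    by (auto intro: prob_spaceI)
qed


lemma meas_bounds:
  assumes xu: "x < u" and b: "\<And>s. s \<in> {x<..u} \<Longrightarrow> lo \<le> exp (- \<Phi> \<bar>s\<bar>) \<and> exp (- \<Phi> \<bar>s\<bar>) \<le> hi"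
    and lo: "0 \<le> lo"
  shows "lo * (u - x) / Z_Phi \<Phi> \<le> measure (mu_Phi \<Phi>) {x<..u}"
    and "measure (mu_Phi \<Phi>) {x<..u} \<le> hi * (u - x) / Z_Phi \<Phi>"
proof -
  interpret real_distribution "mu_Phi \<Phi>" by (rule rd)
  have Z: "Z_Phi \<Phi> > 0" by (rule Z_pos)
  have hi: "0 \<le> hi" using b[of u] xu lo by force
  have Ioc_b: "{x<..u} \<in> sets borel" by simp
  have Ioc_b': "{x<..u} \<in> sets lborel" by simp
  have "ennreal (lo / Z_Phi \<Phi>) * emeasure lborel {x<..u} \<le> emeasure (mu_Phi \<Phi>) {x<..u}"
    unfolding emeasure_mu[OF Ioc_b] nn_integral_cmult_indicator[OF Ioc_b', symmetric]
    apply (rule nn_integral_mono)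
    using b Z by (auto split: split_indicator intro!: ennreal_leI divide_right_mono)
  then have "ennreal (lo * (u - x) / Z_Phi \<Phi>) \<le> ennreal (measure (mu_Phi \<Phi>) {x<..u})"
    using xu Z lo by (simp add: emeasure_eq_measure ennreal_mult[symmetric])
  then show "lo * (u - x) / Z_Phi \<Phi> \<le> measure (mu_Phi \<Phi>) {x<..u}"
    by (simp add: ennreal_le_iff)
  have "emeasure (mu_Phi \<Phi>) {x<..u} \<le> ennreal (hi / Z_Phi \<Phi>) * emeasure lborel {x<..u}"
    unfolding emeasure_mu[OF Ioc_b] nn_integral_cmult_indicator[OF Ioc_b', symmetric]
    apply (rule nn_integral_mono)
    using b Z by (auto split: split_indicator intro!: ennreal_leI divide_right_mono)
  then have "ennreal (measure (mu_Phi \<Phi>) {x<..u}) \<le> ennreal (hi * (u - x) / Z_Phi \<Phi>)"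
    using xu Z hi by (simp add: emeasure_eq_measure ennreal_mult[symmetric])
  then show "measure (mu_Phi \<Phi>) {x<..u} \<le> hi * (u - x) / Z_Phi \<Phi>"
    using xu Z hi by (subst (asm) ennreal_le_iff) auto
qed

lemma cdf_diff: "x < u \<Longrightarrow> cdf (mu_Phi \<Phi>) u - cdf (mu_Phi \<Phi>) x = measure (mu_Phi \<Phi>) {x<..u}"
proof -
  interpret real_distribution "mu_Phi \<Phi>" by (rule rd)
  show "x < u \<Longrightarrow> cdf (mu_Phi \<Phi>) u - cdf (mu_Phi \<Phi>) x = measure (mu_Phi \<Phi>) {x<..u}" by (rule cdf_diff_eq)
qed

lemma cdf_strict: assumes "x < u" shows "cdf (mu_Phi \<Phi>) x < cdf (mu_Phi \<Phi>) u"
proof -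
  let ?M = "max \<bar>x\<bar> \<bar>u\<bar>"
  have "exp (- \<Phi> ?M) * (u - x) / Z_Phi \<Phi> \<le> measure (mu_Phi \<Phi>) {x<..u}"
  proof (rule meas_bounds(1)[OF assms, where hi="exp (- \<Phi> 0)"])
    fix s assume "s \<in> {x<..u}"
    then have "\<bar>s\<bar> \<le> ?M" by auto
    then show "exp (- \<Phi> ?M) \<le> exp (- \<Phi> \<bar>s\<bar>) \<and> exp (- \<Phi> \<bar>s\<bar>) \<le> exp (- \<Phi> 0)"
      using monoD[of "\<bar>s\<bar>" ?M] E_le by simp
  qed simp
  moreover have "exp (- \<Phi> ?M) * (u - x) / Z_Phi \<Phi> > 0" using assms Z_pos by simp
  ultimately show ?thesis using cdf_diff[OF assms] by linarith
qed

lemma cdf_lip: assumes "x < u"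
  shows "cdf (mu_Phi \<Phi>) u - cdf (mu_Phi \<Phi>) x \<le> exp (- \<Phi> 0) * (u - x) / Z_Phi \<Phi>"
  using meas_bounds(2)[OF assms, of 0 "exp (- \<Phi> 0)"] E_le cdf_diff[OF assms] by auto

lemma cdf_cont: "isCont (cdf (mu_Phi \<Phi>)) x"
  unfolding continuous_at_eps_delta
proof (intro allI impI)
  fix e :: real assume e: "e > 0"
  let ?K = "exp (- \<Phi> 0) / Z_Phi \<Phi> + 1"
  have K: "?K > 0" using Z_pos by (simp add: add_pos_nonneg)
  show "\<exists>d>0. \<forall>x'. dist x' x < d \<longrightarrow> dist (cdf (mu_Phi \<Phi>) x') (cdf (mu_Phi \<Phi>) x) < e"
  proof (intro exI[of _ "e / ?K"] conjI allI impI)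
    show "e / ?K > 0" using e K by simp
    fix y assume y: "dist y x < e / ?K"
    have le: "\<bar>cdf (mu_Phi \<Phi>) y - cdf (mu_Phi \<Phi>) x\<bar> \<le> exp (- \<Phi> 0) / Z_Phi \<Phi> * \<bar>y - x\<bar>"
    proof (cases y x rule: linorder_cases)
      case less
      then show ?thesis using cdf_lip[OF less] cdf_strict[OF less] by (simp add: abs_if)
    next
      case greater
      then show ?thesis using cdf_lip[OF greater] cdf_strict[OF greater] by (simp add: abs_if)
    qed simp
    have "(?K - 1) * \<bar>y - x\<bar> \<le> ?K * \<bar>y - x\<bar>" by (intro mult_right_mono) auto
    also have "?K * \<bar>y - x\<bar> < ?K * (e / ?K)"
      using y K by (intro mult_strict_left_mono) (auto simp: dist_real_def)
    also have "\<dots> = e" using K by simp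
    finally show "dist (cdf (mu_Phi \<Phi>) y) (cdf (mu_Phi \<Phi>) x) < e"
      using le by (simp add: dist_real_def)
  qed
qed

lemma quot_bound:
  assumes xu: "x < u" and b: "\<And>s. s \<in> {x<..u} \<Longrightarrow> \<bar>exp (- \<Phi> \<bar>s\<bar>) - e0\<bar> \<le> r * Z_Phi \<Phi>"
  shows "\<bar>measure (mu_Phi \<Phi>) {x<..u} / (u - x) - e0 / Z_Phi \<Phi>\<bar> \<le> r"
proof -
  have Z: "Z_Phi \<Phi> > 0" by (rule Z_pos)
  have "max 0 (e0 - r * Z_Phi \<Phi>) * (u - x) / Z_Phi \<Phi> \<le> measure (mu_Phi \<Phi>) {x<..u}"
    by (rule meas_bounds(1)[OF xu, where hi="e0 + r * Z_Phi \<Phi>"]) (use b in force)+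
  moreover have "measure (mu_Phi \<Phi>) {x<..u} \<le> (e0 + r * Z_Phi \<Phi>) * (u - x) / Z_Phi \<Phi>"
    by (rule meas_bounds(2)[OF xu, where lo=0]) (use b in force)+
  moreover have "(e0 - r * Z_Phi \<Phi>) * (u - x) / Z_Phi \<Phi> \<le> max 0 (e0 - r * Z_Phi \<Phi>) * (u - x) / Z_Phi \<Phi>"
    using xu Z by (intro divide_right_mono mult_right_mono) auto
  ultimately have "(e0 - r * Z_Phi \<Phi>) * (u - x) / Z_Phi \<Phi> \<le> measure (mu_Phi \<Phi>) {x<..u}"
    "measure (mu_Phi \<Phi>) {x<..u} \<le> (e0 + r * Z_Phi \<Phi>) * (u - x) / Z_Phi \<Phi>"
    by linarith+
  then have "(e0 - r * Z_Phi \<Phi>) / Z_Phi \<Phi> \<le> measure (mu_Phi \<Phi>) {x<..u} / (u - x)"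
    "measure (mu_Phi \<Phi>) {x<..u} / (u - x) \<le> (e0 + r * Z_Phi \<Phi>) / Z_Phi \<Phi>"
    using xu Z by (simp_all add: field_simps)
  then show ?thesis using Z by (simp add: diff_divide_distrib add_divide_distrib abs_le_iff)
qed

lemma cdf_deriv:
  assumes c: "isCont (\<lambda>s. exp (- \<Phi> \<bar>s\<bar>)) x"
  shows "(cdf (mu_Phi \<Phi>) has_real_derivative exp (- \<Phi> \<bar>x\<bar>) / Z_Phi \<Phi>) (at x)"
  unfolding has_field_derivative_iff LIM_eq
proof (intro allI impI)
  fix r :: real assume r: "r > 0"
  have Z: "Z_Phi \<Phi> > 0" by (rule Z_pos)
  obtain d where d: "d > 0" "\<And>s. dist s x < d \<Longrightarrow> dist (exp (- \<Phi> \<bar>s\<bar>)) (exp (- \<Phi> \<bar>x\<bar>)) < r / 2 * Z_Phi \<Phi>"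
    using c r Z unfolding continuous_at_eps_delta by (metis half_gt_zero mult_pos_pos)
  show "\<exists>s>0. \<forall>y. y \<noteq> x \<and> norm (y - x) < s \<longrightarrow>
      norm ((cdf (mu_Phi \<Phi>) y - cdf (mu_Phi \<Phi>) x) / (y - x) - exp (- \<Phi> \<bar>x\<bar>) / Z_Phi \<Phi>) < r"
  proof (intro exI[of _ d] conjI allI impI)
    fix y assume y: "y \<noteq> x \<and> norm (y - x) < d"
    show "norm ((cdf (mu_Phi \<Phi>) y - cdf (mu_Phi \<Phi>) x) / (y - x) - exp (- \<Phi> \<bar>x\<bar>) / Z_Phi \<Phi>) < r"
    proof (cases "x < y")
      case True
      have "\<bar>measure (mu_Phi \<Phi>) {x<..y} / (y - x) - exp (- \<Phi> \<bar>x\<bar>) / Z_Phi \<Phi>\<bar> \<le> r / 2"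
        apply (rule quot_bound[OF True])
        subgoal for s using d(2)[of s] y by (auto simp: dist_real_def)
        done
      then show ?thesis using cdf_diff[OF True] r by simp
    next
      case False
      then have yx: "y < x" using y by auto
      have "\<bar>measure (mu_Phi \<Phi>) {y<..x} / (x - y) - exp (- \<Phi> \<bar>x\<bar>) / Z_Phi \<Phi>\<bar> \<le> r / 2"
        apply (rule quot_bound[OF yx])
        subgoal for s using d(2)[of s] y by (auto simp: dist_real_def)
        done
      moreover have "(cdf (mu_Phi \<Phi>) y - cdf (mu_Phi \<Phi>) x) / (y - x) = measure (mu_Phi \<Phi>) {y<..x} / (x - y)"
        using cdf_diff[OF yx] by (metis minus_diff_eq minus_divide_divide)
      ultimately show ?thesis using r by simp
    qed
  qed (use d in auto)
qed


abbreviation "F \<equiv> cdf (mu_Phi \<Phi>)"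

lemma cdf_range: "0 < F x" "F x < 1"
proof -
  interpret real_distribution "mu_Phi \<Phi>" by (rule rd)
  show "0 < F x" using cdf_strict[of "x - 1" x] cdf_nonneg[of "x - 1"] by simp
  show "F x < 1" using cdf_strict[of x "x + 1"] cdf_bounded_prob[of "x + 1"] by simp
qed

lemma cdf_inj: "F x = F y \<Longrightarrow> x = y"
  using cdf_strict[of x y] cdf_strict[of y x] by (cases x y rule: linorder_cases) auto

lemma cdf_surj: assumes "0 < t" "t < 1" shows "\<exists>x. F x = t"
proof -
  interpret real_distribution "mu_Phi \<Phi>" by (rule rd)
  have "eventually (\<lambda>x. F x < t) at_bot"
    using order_tendstoD(2)[OF cdf_lim_at_bot assms(1)] .
  then obtain x1 where x1: "F x1 < t" by (meson eventually_at_bot_linorder order_refl)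
  have "eventually (\<lambda>x. F x > t) at_top"
    using order_tendstoD(1)[OF cdf_lim_at_top_prob assms(2)] .
  then obtain x2 where x2: "F x2 > t" by (meson eventually_at_top_linorder order_refl)
  have "x1 \<le> x2"
  proof (rule ccontr)
    assume "\<not> x1 \<le> x2" then have "F x2 < F x1" using cdf_strict by simp
    then show False using x1 x2 by simp
  qed
  moreover have "continuous_on {x1..x2} F"
    using cdf_cont by (simp add: continuous_at_imp_continuous_on)
  ultimately show ?thesis using IVT'[of F x1 t x2] x1 x2 by auto
qed

lemma cdf_inv: "0 < t \<Longrightarrow> t < 1 \<Longrightarrow> F (inv_into UNIV F t) = t"
  using cdf_surj by (intro f_inv_into_f) auto

lemma inv_cdf: "inv_into UNIV F (F x) = x"
  by (rule inv_into_f_f) (auto intro: inj_onI cdf_inj)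

lemma reflect: "emeasure (mu_Phi \<Phi>) {..-x} = emeasure (mu_Phi \<Phi>) {x..}"
proof -
  have "emeasure (mu_Phi \<Phi>) {..-x} = (\<integral>\<^sup>+ s. ennreal (exp (- \<Phi> \<bar>s\<bar>) / Z_Phi \<Phi>) * indicator {..-x} s \<partial>lborel)"
    by (rule emeasure_mu) simp
  also have "\<dots> = (\<integral>\<^sup>+ s. ennreal (exp (- \<Phi> \<bar>0 + (-1) * s\<bar>) / Z_Phi \<Phi>) * indicator {..-x} (0 + (-1) * s) \<partial>lborel)"
    using nn_integral_real_affine[where c="-1::real" and t=0, of "\<lambda>s. ennreal (exp (- \<Phi> \<bar>s\<bar>) / Z_Phi \<Phi>) * indicator {..-x} s"]
    by simp
  also have "\<dots> = (\<integral>\<^sup>+ s. ennreal (exp (- \<Phi> \<bar>s\<bar>) / Z_Phi \<Phi>) * indicator {x..} s \<partial>lborel)"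
    by (intro nn_integral_cong) (auto split: split_indicator)
  also have "\<dots> = emeasure (mu_Phi \<Phi>) {x..}"
    by (rule emeasure_mu[symmetric]) simp
  finally show ?thesis .
qed

lemma cdf_neg: "F (- x) = 1 - F x"
proof -
  interpret real_distribution "mu_Phi \<Phi>" by (rule rd)
  have "F (- x) = measure (mu_Phi \<Phi>) {x..}"
    using reflect[of x] by (simp add: cdf_def measure_def)
  also have "measure (mu_Phi \<Phi>) {x..} = 1 - measure (mu_Phi \<Phi>) {..<x}"
  proof -
    have "measure (mu_Phi \<Phi>) ({x..} \<union> {..<x}) = measure (mu_Phi \<Phi>) {x..} + measure (mu_Phi \<Phi>) {..<x}"
      by (rule finite_measure_Union) auto
    moreover have "{x..} \<union> {..<x} = UNIV" by auto
    ultimately show ?thesis using prob_space by simp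
  qed
  also have "measure (mu_Phi \<Phi>) {..<x} = F x"
  proof -
    have "measure (mu_Phi \<Phi>) {x} = 0" using isCont_cdf cdf_cont by blast
    moreover have "measure (mu_Phi \<Phi>) ({..<x} \<union> {x}) = measure (mu_Phi \<Phi>) {..<x} + measure (mu_Phi \<Phi>) {x}"
      by (rule finite_measure_Union) auto
    moreover have "{..<x} \<union> {x} = {..x}" by auto
    ultimately show ?thesis by (simp add: cdf_def)
  qed
  finally show ?thesis .
qed

lemma J_eq:
  assumes t: "0 < t" "t < 1" and c: "isCont (\<lambda>s. exp (- \<Phi> \<bar>s\<bar>)) (inv_into UNIV F t)"
  shows "J_of (mu_Phi \<Phi>) t = exp (- \<Phi> \<bar>inv_into UNIV F t\<bar>) / Z_Phi \<Phi>"
  unfolding J_of_def using t DERIV_imp_deriv[OF cdf_deriv[OF c]] by simp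


lemma Phi_inv_props:
  assumes b: "0 < b" and V: "\<Phi> b < V"
  shows "V \<in> \<Phi> ` {0..}" "b < Phi_inv \<Phi> V" "\<Phi> (Phi_inv \<Phi> V) = V" "0 \<le> Phi_inv \<Phi> V"
proof -
  obtain X where X: "X \<ge> 0" "V < \<Phi> X" using unbounded by blast
  have bX: "b \<le> X"
  proof (rule ccontr)
    assume "\<not> b \<le> X" then have "\<Phi> X \<le> \<Phi> b" using monoD X by simp
    then show False using X V by simp
  qed
  have "continuous_on {b..X} \<Phi>" by (rule continuous_on_subset[OF cont]) (use b in auto)
  then obtain x where x: "b \<le> x" "x \<le> X" "\<Phi> x = V" using IVT'[of \<Phi> b V X] V X bX by auto
  then show V_in: "V \<in> \<Phi> ` {0..}" using b by (auto intro!: image_eqI[of _ _ x])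
  show eq: "\<Phi> (Phi_inv \<Phi> V) = V" unfolding Phi_inv_def by (rule f_inv_into_f[OF V_in])
  show nn: "0 \<le> Phi_inv \<Phi> V" unfolding Phi_inv_def using inv_into_into[OF V_in] by simp
  show "b < Phi_inv \<Phi> V"
  proof (rule ccontr)
    assume "\<not> b < Phi_inv \<Phi> V"
    then have "\<Phi> (Phi_inv \<Phi> V) \<le> \<Phi> b" using monoD nn by simp
    then show False using eq V by simp
  qed
qed

lemma isCont_E: assumes "x \<noteq> 0" shows "isCont (\<lambda>s. exp (- \<Phi> \<bar>s\<bar>)) x"
proof -
  have "isCont \<Phi> \<bar>x\<bar>" using cont assms by (simp add: continuous_on_eq_continuous_at)
  moreover have ca: "isCont (\<lambda>s. \<bar>s\<bar>) x" by (intro continuous_intros)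
  ultimately have "isCont (\<lambda>s. \<Phi> \<bar>s\<bar>) x" using isCont_o2[OF ca] by simp
  then show ?thesis by (intro continuous_intros)
qed

lemma cdf_neg_meas: "F (- y) = measure (mu_Phi \<Phi>) {y..}"
  using reflect[of y] by (simp add: cdf_def measure_def)

lemma tt_tendsto: "((\<lambda>y. F (- y)) \<longlongrightarrow> 0) at_top"
proof -
  interpret real_distribution "mu_Phi \<Phi>" by (rule rd)
  show ?thesis using filterlim_compose[OF cdf_lim_at_bot filterlim_uminus_at_bot_at_top] .
qed


lemma slope_alg: "(a::real) \<noteq> b \<Longrightarrow> ((- p) - (- q)) / (a - b) = - ((q - p) / (b - a))"
  by (simp add: field_simps)

lemma slope_mono:
  assumes "0 \<le> x" "x < w1" "w1 \<le> w2"
  shows "(\<Phi> w2 - \<Phi> x) / (w2 - x) \<le> (\<Phi> w1 - \<Phi> x) / (w1 - x)"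
proof (cases "w1 = w2")
  case False
  then have w: "w1 < w2" using assms by simp
  have cv: "convex_on {0..} (\<lambda>x. - \<Phi> x)" using concave by (simp add: concave_on_def)
  have "((- \<Phi> x) - (- \<Phi> w1)) / (x - w1) \<le> ((- \<Phi> x) - (- \<Phi> w2)) / (x - w2)"
    using convex_on_slope_le(1)[OF cv, of x w2 w1] assms w by simp
  then show ?thesis using assms w by (simp only: slope_alg)
qed simp

lemma slope_cross:
  assumes "0 \<le> u" "u < x" "x < w"
  shows "(\<Phi> w - \<Phi> x) / (w - x) \<le> (\<Phi> x - \<Phi> u) / (x - u)"
proof -
  have cv: "convex_on {0..} (\<lambda>x. - \<Phi> x)" using concave by (simp add: concave_on_def)
  have "((- \<Phi> u) - (- \<Phi> x)) / (u - x) \<le> ((- \<Phi> u) - (- \<Phi> w)) / (u - w)"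
    using convex_on_slope_le(1)[OF cv, of u w x] assms by simp
  also have "\<dots> \<le> ((- \<Phi> x) - (- \<Phi> w)) / (x - w)"
    using convex_on_slope_le(2)[OF cv, of u w x] assms by simp
  finally show ?thesis using assms by (simp only: slope_alg)
qed

lemma rderiv_exists:
  assumes x: "0 < x" shows "\<exists>D. (\<Phi> has_real_derivative D) (at_right x)"
proof -
  let ?q = "\<lambda>w. (\<Phi> w - \<Phi> x) / (w - x)"
  have "((\<lambda>w. - ?q w) \<longlongrightarrow> Inf ((\<lambda>w. - ?q w) ` ({x<..} \<inter> UNIV))) (at x within ({x<..} \<inter> UNIV))"
  proof (rule Lim_right_bound)
    fix a b assume "x < a" "a \<le> b"
    then show "- ?q a \<le> - ?q b" using slope_mono[of x a b] x by simp
  next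
    fix a assume "x < a"
    then show "- ((\<Phi> x - \<Phi> 0) / (x - 0)) \<le> - ?q a" using slope_cross[of 0 x a] x by simp
  qed
  then have "(?q \<longlongrightarrow> - Inf ((\<lambda>w. - ?q w) ` ({x<..} \<inter> UNIV))) (at_right x)"
    using tendsto_minus by fastforce
  then show ?thesis unfolding has_field_derivative_iff by blast
qed

lemma rderiv_bounds:
  assumes D: "(\<Phi> has_real_derivative D) (at_right x)" and u: "0 \<le> u" "u < x"
  shows "x < w \<Longrightarrow> (\<Phi> w - \<Phi> x) / (w - x) \<le> D" and "D \<le> (\<Phi> x - \<Phi> u) / (x - u)"
proof -
  have lim: "((\<lambda>w. (\<Phi> w - \<Phi> x) / (w - x)) \<longlongrightarrow> D) (at_right x)"
    using D unfolding has_field_derivative_iff .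
  have nt: "\<not> trivial_limit (at_right x)" by simp
  show "x < w \<Longrightarrow> (\<Phi> w - \<Phi> x) / (w - x) \<le> D"
  proof -
    assume w: "x < w"
    have "eventually (\<lambda>w'. (\<Phi> w - \<Phi> x) / (w - x) \<le> (\<Phi> w' - \<Phi> x) / (w' - x)) (at_right x)"
      unfolding eventually_at_right_field
      using w u by (intro exI[of _ w]) (auto intro!: slope_mono)
    then show ?thesis by (rule tendsto_lowerbound[OF lim _ nt])
  qed
  have "eventually (\<lambda>w'. (\<Phi> w' - \<Phi> x) / (w' - x) \<le> (\<Phi> x - \<Phi> u) / (x - u)) (at_right x)"
    unfolding eventually_at_right_field
    using u by (intro exI[of _ "x + 1"]) (auto intro!: slope_cross)
  then show "D \<le> (\<Phi> x - \<Phi> u) / (x - u)" by (rule tendsto_upperbound[OF lim _ nt])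
qed

end

lemma rderiv_eq:
  assumes "(f has_real_derivative D) (at_right x)"
  shows "rderiv f x = D"
  unfolding rderiv_def
proof (rule the_equality[where P="\<lambda>D. (f has_real_derivative D) (at_right x)", OF assms])
  fix D' assume "(f has_real_derivative D') (at_right x)"
  then have l1: "((\<lambda>y. (f y - f x) / (y - x)) \<longlongrightarrow> D') (at_right x)" unfolding has_field_derivative_iff .
  have l2: "((\<lambda>y. (f y - f x) / (y - x)) \<longlongrightarrow> D) (at_right x)" using assms unfolding has_field_derivative_iff .
  have nb: "(at_right x :: real filter) \<noteq> bot" using trivial_limit_at_right_real[of x] by (simp add: trivial_limit_def)
  show "D' = D" using tendsto_unique[OF nb l1 l2] .
qed

lemma exp_neg_tendsto0:
  assumes "filterlim g at_top F"
  shows "((\<lambda>x. exp (- g x)) \<longlongrightarrow> (0::real)) F"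
  using filterlim_compose[OF exp_at_bot filterlim_uminus_at_top[THEN iffD1, OF assms]] .

lemma lin_at_top:
  fixes c :: real assumes c: "c > 0"
  shows "filterlim (\<lambda>s. A + c * (s - B)) at_top at_top"
  unfolding filterlim_at_top
proof
  fix Z :: real
  show "eventually (\<lambda>s. Z \<le> A + c * (s - B)) at_top"
  proof (rule eventually_at_top_linorderI[of "B + (Z - A) / c"])
    fix s assume "B + (Z - A) / c \<le> s"
    then have "(Z - A) / c \<le> s - B" by simp
    then have "c * ((Z - A) / c) \<le> c * (s - B)" using c by (intro mult_left_mono) auto
    then show "Z \<le> A + c * (s - B)" using c by simp
  qed
qed

locale phi_tail = phi_ctx +
  fixes a \<theta> :: real and f1 :: "real \<Rightarrow> real"
  assumes a_pos: "0 < a"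
    and d1: "\<And>x. a < x \<Longrightarrow> (\<Phi> has_real_derivative f1 x) (at x)"
    and f1_cont: "continuous_on {a<..} f1"
    and th: "1 < \<theta>"
    and Phi_pos: "\<And>x. a < x \<Longrightarrow> 0 < \<Phi> x"
    and conv: "convex_on {a<..} (\<lambda>x. \<Phi> x powr \<theta>)"
begin

lemma f1_pos: "a < x \<Longrightarrow> 0 < f1 x"
  using deriv_pos[OF _ d1] a_pos by simp

lemma f1_antimono:
  assumes "a < x" "x \<le> z" shows "f1 z \<le> f1 x"
proof (cases "x = z")
  case False
  then have xz: "x < z" using assms by simp
  have "\<Phi> z \<le> \<Phi> x + f1 x * (z - x)" using tangent[OF _ d1[OF assms(1)]] assms a_pos by simp
  moreover have "\<Phi> x \<le> \<Phi> z + f1 z * (x - z)" using tangent[OF _ d1] assms a_pos by simp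
  ultimately have "f1 z * (z - x) \<le> f1 x * (z - x)" by (simp add: algebra_simps)
  then show ?thesis using xz by simp
qed simp

definition "Dpsi s = \<Phi> s powr \<theta> * (0 * ln (\<Phi> s) + f1 s * \<theta> / \<Phi> s)"

lemma psi_deriv: "a < s \<Longrightarrow> ((\<lambda>x. \<Phi> x powr \<theta>) has_real_derivative Dpsi s) (at s)"
  unfolding Dpsi_def
  using has_real_derivative_powr'[OF d1 DERIV_const, of s \<theta>] Phi_pos by simp

lemma Dpsi_eq: "a < s \<Longrightarrow> Dpsi s = \<theta> * (f1 s * \<Phi> s powr (\<theta> - 1))"
  unfolding Dpsi_def using Phi_pos[of s] by (simp add: powr_diff field_simps)

lemma psi_tangent:
  assumes "a < c" "a < x"
  shows "\<Phi> x powr \<theta> - \<Phi> c powr \<theta> \<ge> Dpsi c * (x - c)"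
proof -
  have i: "c \<in> interior {a<..}" using assms by (simp add: interior_open)
  show ?thesis
    using convex_on_imp_above_tangent[OF conv connected_Ioi i _ has_field_derivative_at_within[OF psi_deriv[OF assms(1)]]] assms
    by simp
qed

lemma g_mono:
  assumes "a < x" "x \<le> z" shows "f1 x * \<Phi> x powr (\<theta> - 1) \<le> f1 z * \<Phi> z powr (\<theta> - 1)"
proof (cases "x = z")
  case False
  then have xz: "x < z" using assms by simp
  have "Dpsi x * (z - x) \<le> \<Phi> z powr \<theta> - \<Phi> x powr \<theta>" using psi_tangent assms by simp
  moreover have "Dpsi z * (x - z) \<le> \<Phi> x powr \<theta> - \<Phi> z powr \<theta>" using psi_tangent assms by simp
  ultimately have "Dpsi x * (z - x) \<le> Dpsi z * (z - x)" by (simp add: algebra_simps)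
  then have "Dpsi x \<le> Dpsi z" using xz by simp
  then show ?thesis using Dpsi_eq assms th by simp
qed simp

lemma f1_lower:
  assumes "a < x" "x \<le> z"
  shows "exp (- ((\<theta> - 1) / \<Phi> x) * (\<Phi> z - \<Phi> x)) \<le> f1 z / f1 x"
proof -
  have Px: "\<Phi> x > 0" and Pz: "\<Phi> z > 0" using Phi_pos assms by auto
  have fx: "f1 x > 0" and fz: "f1 z > 0" using f1_pos assms by auto
  have "f1 x * \<Phi> x powr (\<theta> - 1) \<le> f1 z * \<Phi> z powr (\<theta> - 1)" by (rule g_mono[OF assms])
  then have A: "(\<Phi> x / \<Phi> z) powr (\<theta> - 1) \<le> f1 z / f1 x"
    using Px Pz fx by (simp add: powr_divide field_simps)
  have B: "(\<Phi> x / \<Phi> z) powr (\<theta> - 1) = exp ((\<theta> - 1) * ln (\<Phi> x / \<Phi> z))"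
    using Px Pz by (simp add: powr_def)
  have "ln (\<Phi> z / \<Phi> x) \<le> \<Phi> z / \<Phi> x - 1"
    using Px Pz by (intro ln_le_minus_one) simp
  then have C1: "(\<theta> - 1) * ln (\<Phi> z / \<Phi> x) \<le> (\<theta> - 1) * (\<Phi> z / \<Phi> x - 1)"
    using th by (intro mult_left_mono) auto
  have C2: "ln (\<Phi> x / \<Phi> z) = - ln (\<Phi> z / \<Phi> x)" using Px Pz by (simp add: ln_div)
  have C3: "(\<theta> - 1) * (\<Phi> z / \<Phi> x - 1) = (\<theta> - 1) / \<Phi> x * (\<Phi> z - \<Phi> x)"
    using Px by (simp add: field_simps)
  have "- ((\<theta> - 1) / \<Phi> x) * (\<Phi> z - \<Phi> x) \<le> (\<theta> - 1) * ln (\<Phi> x / \<Phi> z)"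
    using C1 C2 C3 by simp
  then have "exp (- ((\<theta> - 1) / \<Phi> x) * (\<Phi> z - \<Phi> x)) \<le> exp ((\<theta> - 1) * ln (\<Phi> x / \<Phi> z))"
    by (subst exp_le_cancel_iff)
  then show ?thesis using A B by linarith
qed


lemma tail_bounds:
  assumes y: "a < y" and k: "(\<theta> - 1) / \<Phi> y < 1"
  shows "exp (- \<Phi> y) / (f1 y * Z_Phi \<Phi>) \<le> measure (mu_Phi \<Phi>) {y..}"
    and "measure (mu_Phi \<Phi>) {y..} \<le> exp (- \<Phi> y) / ((1 - (\<theta> - 1) / \<Phi> y) * f1 y * Z_Phi \<Phi>)"
proof -
  interpret real_distribution "mu_Phi \<Phi>" by (rule rd)
  define U where "U = \<Phi> y"
  define c where "c = f1 y"
  define Z where "Z = Z_Phi \<Phi>"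
  define \<kappa> where "\<kappa> = (\<theta> - 1) / \<Phi> y"
  have c: "c > 0" using f1_pos y by (simp add: c_def)
  have Z: "Z > 0" using Z_pos by (simp add: Z_def)
  have U: "U > 0" using Phi_pos y by (simp add: U_def)
  have ka: "0 \<le> \<kappa>" "\<kappa> < 1" using th U k by (auto simp: \<kappa>_def U_def)
  have ypos: "y > 0" using y a_pos by simp
  have em: "emeasure (mu_Phi \<Phi>) {y..} = (\<integral>\<^sup>+ s. ennreal (exp (- \<Phi> \<bar>s\<bar>) / Z) * indicator {y..} s \<partial>lborel)"
    unfolding Z_def by (rule emeasure_mu) simp
  have "(\<integral>\<^sup>+ s. ennreal (exp (- (U + c * (s - y))) / Z) * indicator {y..} s \<partial>lborel)
      = ennreal (0 - (- exp (- (U + c * (y - y))) / (c * Z)))"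
  proof (rule nn_integral_FTC_atLeast[where F="\<lambda>s. - exp (- (U + c * (s - y))) / (c * Z)" and T=0])
    show "(\<lambda>s. exp (- (U + c * (s - y))) / Z) \<in> borel_measurable borel" by measurable
    fix x assume "y \<le> x"
    show "((\<lambda>s. - exp (- (U + c * (s - y))) / (c * Z)) has_real_derivative exp (- (U + c * (x - y))) / Z) (at x)"
      using c Z by (auto intro!: derivative_eq_intros simp: field_simps)
    show "0 \<le> exp (- (U + c * (x - y))) / Z" using Z by simp
  next
    show "((\<lambda>s. - exp (- (U + c * (s - y))) / (c * Z)) \<longlongrightarrow> 0) at_top"
      using tendsto_divide[OF tendsto_minus[OF exp_neg_tendsto0[OF lin_at_top[OF c, of U y]]] tendsto_const[of "c * Z"]] c Z
      by simp
  qed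
  also have "\<dots> = ennreal (exp (- U) / (c * Z))" by simp
  finally have low_eq: "(\<integral>\<^sup>+ s. ennreal (exp (- (U + c * (s - y))) / Z) * indicator {y..} s \<partial>lborel) = ennreal (exp (- U) / (c * Z))" .
  have "(\<integral>\<^sup>+ s. ennreal (exp (- (U + c * (s - y))) / Z) * indicator {y..} s \<partial>lborel)
      \<le> (\<integral>\<^sup>+ s. ennreal (exp (- \<Phi> \<bar>s\<bar>) / Z) * indicator {y..} s \<partial>lborel)"
  proof (rule nn_integral_mono)
    fix s :: real
    show "ennreal (exp (- (U + c * (s - y))) / Z) * indicator {y..} s \<le> ennreal (exp (- \<Phi> \<bar>s\<bar>) / Z) * indicator {y..} s"
    proof (cases "y \<le> s")
      case True
      then have "\<Phi> s \<le> U + c * (s - y)" using tangent[OF ypos d1[OF y]] ypos by (simp add: U_def c_def)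
      then have "exp (- (U + c * (s - y))) / Z \<le> exp (- \<Phi> \<bar>s\<bar>) / Z"
        using True ypos Z by (intro divide_right_mono) auto
      then show ?thesis using True by (auto intro: ennreal_leI)
    qed simp
  qed
  then have "ennreal (exp (- U) / (c * Z)) \<le> ennreal (measure (mu_Phi \<Phi>) {y..})"
    using low_eq em by (simp add: emeasure_eq_measure)
  then show "exp (- \<Phi> y) / (f1 y * Z_Phi \<Phi>) \<le> measure (mu_Phi \<Phi>) {y..}"
    by (simp add: ennreal_le_iff U_def c_def Z_def)
  define g where "g s = exp (- ((1 - \<kappa>) * \<Phi> (max s y) + \<kappa> * U)) * f1 (max s y) / (c * Z)" for s
  have gb: "g \<in> borel_measurable borel"
  proof -
    have m1: "(\<lambda>s. \<Phi> (max s y)) \<in> borel_measurable borel"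
      by (rule borel_measurable_mono) (use ypos in \<open>auto simp: mono_def intro!: monoD max.mono intro: order_trans[OF less_imp_le[OF ypos]]\<close>)
    have "(\<lambda>s. - f1 (max s y)) \<in> borel_measurable borel"
      by (rule borel_measurable_mono) (auto simp: mono_def intro!: f1_antimono y max.mono
          intro: less_le_trans[OF y])
    then have m2: "(\<lambda>s. f1 (max s y)) \<in> borel_measurable borel"
      using borel_measurable_uminus by fastforce
    show ?thesis unfolding g_def using m1 m2 by measurable
  qed
  have "(\<integral>\<^sup>+ s. ennreal (g s) * indicator {y..} s \<partial>lborel)
      = ennreal (0 - (- exp (- ((1 - \<kappa>) * \<Phi> y + \<kappa> * U)) / ((1 - \<kappa>) * c * Z)))"
  proof (rule nn_integral_FTC_atLeast[OF gb, where F="\<lambda>s. - exp (- ((1 - \<kappa>) * \<Phi> s + \<kappa> * U)) / ((1 - \<kappa>) * c * Z)" and T=0])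
    fix x assume x: "y \<le> x"
    then have ax: "a < x" using y by simp
    have "((\<lambda>s. exp (- ((1 - \<kappa>) * \<Phi> s + \<kappa> * U))) has_real_derivative
        exp (- ((1 - \<kappa>) * \<Phi> x + \<kappa> * U)) * (- ((1 - \<kappa>) * f1 x))) (at x)"
      by (auto intro!: derivative_eq_intros d1[OF ax])
    from DERIV_cmult_right[OF this, of "- 1 / ((1 - \<kappa>) * c * Z)"]
    have "((\<lambda>s. - exp (- ((1 - \<kappa>) * \<Phi> s + \<kappa> * U)) / ((1 - \<kappa>) * c * Z)) has_real_derivative
        exp (- ((1 - \<kappa>) * \<Phi> x + \<kappa> * U)) * (- ((1 - \<kappa>) * f1 x)) * (- 1 / ((1 - \<kappa>) * c * Z))) (at x)"
      by simp
    moreover have "exp (- ((1 - \<kappa>) * \<Phi> x + \<kappa> * U)) * (- ((1 - \<kappa>) * f1 x)) * (- 1 / ((1 - \<kappa>) * c * Z))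
       = exp (- ((1 - \<kappa>) * \<Phi> x + \<kappa> * U)) * f1 x / (c * Z)"
    proof -
      have gen: "\<And>(A::real) f q K. q \<noteq> 0 \<Longrightarrow> K \<noteq> 0 \<Longrightarrow> A * (- (q * f)) * (- 1 / (q * K)) = A * f / K"
        by (simp add: field_simps)
      have "1 - \<kappa> \<noteq> 0" "c * Z \<noteq> 0" using ka c Z by auto
      from gen[OF this] show ?thesis by (simp add: mult.assoc)
    qed
    ultimately have "((\<lambda>s. - exp (- ((1 - \<kappa>) * \<Phi> s + \<kappa> * U)) / ((1 - \<kappa>) * c * Z)) has_real_derivative
        exp (- ((1 - \<kappa>) * \<Phi> x + \<kappa> * U)) * f1 x / (c * Z)) (at x)" by simp
    then show "((\<lambda>s. - exp (- ((1 - \<kappa>) * \<Phi> s + \<kappa> * U)) / ((1 - \<kappa>) * c * Z)) has_real_derivative g x) (at x)"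
      using x by (simp add: g_def max_absorb1)
    show "0 \<le> g x" using f1_pos[OF ax] c Z x by (simp add: g_def max_absorb1)
  next
    have "filterlim (\<lambda>s. (1 - \<kappa>) * \<Phi> s + \<kappa> * U) at_top at_top"
      unfolding filterlim_at_top
    proof
      fix M :: real
      have "eventually (\<lambda>s. (M - \<kappa> * U) / (1 - \<kappa>) \<le> \<Phi> s) at_top"
        using tendsto_top unfolding filterlim_at_top by blast
      then show "eventually (\<lambda>s. M \<le> (1 - \<kappa>) * \<Phi> s + \<kappa> * U) at_top"
      proof (rule eventually_mono)
        fix s assume "(M - \<kappa> * U) / (1 - \<kappa>) \<le> \<Phi> s"
        then have "M - \<kappa> * U \<le> (1 - \<kappa>) * \<Phi> s" using ka by (simp add: pos_divide_le_eq mult.commute)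
        then show "M \<le> (1 - \<kappa>) * \<Phi> s + \<kappa> * U" by simp
      qed
    qed
    then show "((\<lambda>s. - exp (- ((1 - \<kappa>) * \<Phi> s + \<kappa> * U)) / ((1 - \<kappa>) * c * Z)) \<longlongrightarrow> 0) at_top"
      using tendsto_divide[OF tendsto_minus[OF exp_neg_tendsto0[OF \<open>filterlim _ at_top at_top\<close>]] tendsto_const[of "(1 - \<kappa>) * c * Z"]] c Z ka
      by simp
  qed
  also have "\<dots> = ennreal (exp (- U) / ((1 - \<kappa>) * c * Z))"
    by (simp add: U_def algebra_simps)
  finally have up_eq: "(\<integral>\<^sup>+ s. ennreal (g s) * indicator {y..} s \<partial>lborel) = ennreal (exp (- U) / ((1 - \<kappa>) * c * Z))" .
  have "(\<integral>\<^sup>+ s. ennreal (exp (- \<Phi> \<bar>s\<bar>) / Z) * indicator {y..} s \<partial>lborel)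
      \<le> (\<integral>\<^sup>+ s. ennreal (g s) * indicator {y..} s \<partial>lborel)"
  proof (rule nn_integral_mono)
    fix s :: real
    show "ennreal (exp (- \<Phi> \<bar>s\<bar>) / Z) * indicator {y..} s \<le> ennreal (g s) * indicator {y..} s"
    proof (cases "y \<le> s")
      case True
      have eq: "exp (- \<kappa> * (\<Phi> s - U)) = exp (- ((\<theta> - 1) / \<Phi> y) * (\<Phi> s - \<Phi> y))"
        by (simp add: \<kappa>_def U_def)
      have A: "exp (- \<kappa> * (\<Phi> s - U)) \<le> f1 s / c" unfolding eq c_def by (rule f1_lower[OF y True])
      have "exp (- \<Phi> s) = exp (- ((1 - \<kappa>) * \<Phi> s + \<kappa> * U)) * exp (- \<kappa> * (\<Phi> s - U))"
        by (simp add: exp_add[symmetric] algebra_simps)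
      also have "\<dots> \<le> exp (- ((1 - \<kappa>) * \<Phi> s + \<kappa> * U)) * (f1 s / c)"
        using A by (intro mult_left_mono) auto
      finally have "exp (- \<Phi> s) / Z \<le> exp (- ((1 - \<kappa>) * \<Phi> s + \<kappa> * U)) * (f1 s / c) / Z"
        using Z by (intro divide_right_mono) auto
      then have "exp (- \<Phi> \<bar>s\<bar>) / Z \<le> g s" using True ypos by (simp add: g_def max_absorb1)
      then show ?thesis using True by (auto intro: ennreal_leI)
    qed simp
  qed
  then have "ennreal (measure (mu_Phi \<Phi>) {y..}) \<le> ennreal (exp (- U) / ((1 - \<kappa>) * c * Z))"
    using up_eq em by (simp add: emeasure_eq_measure)
  then show "measure (mu_Phi \<Phi>) {y..} \<le> exp (- \<Phi> y) / ((1 - (\<theta> - 1) / \<Phi> y) * f1 y * Z_Phi \<Phi>)"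
    using ka c Z by (subst (asm) ennreal_le_iff) (auto simp: U_def c_def Z_def \<kappa>_def)
qed


lemma kk_tendsto: "((\<lambda>y. (\<theta> - 1) / \<Phi> y) \<longlongrightarrow> 0) at_top"
  by (rule tendsto_divide_0[OF tendsto_const filterlim_at_top_imp_at_infinity[OF tendsto_top]])

lemma lnf1_tendsto: "((\<lambda>y. ln (f1 y) / \<Phi> y) \<longlongrightarrow> 0) at_top"
proof -
  define y0 where "y0 = a + 1"
  have y0: "a < y0" by (simp add: y0_def)
  define g0 where "g0 = f1 y0 * \<Phi> y0 powr (\<theta> - 1)"
  have g0: "g0 > 0" using f1_pos[OF y0] Phi_pos[OF y0] by (simp add: g0_def)
  have ev: "eventually (\<lambda>y. y0 \<le> y) at_top" by simp
  have up: "eventually (\<lambda>y. ln (f1 y) / \<Phi> y \<le> ln (f1 y0) / \<Phi> y) at_top"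
    using ev
  proof eventually_elim
    case (elim y)
    then have "f1 y \<le> f1 y0" using f1_antimono y0 by simp
    then have "ln (f1 y) \<le> ln (f1 y0)" using f1_pos y0 elim by simp
    then show ?case using Phi_pos[of y] y0 elim by (simp add: divide_right_mono)
  qed
  have lo: "eventually (\<lambda>y. (ln g0 - (\<theta> - 1) * ln (\<Phi> y)) / \<Phi> y \<le> ln (f1 y) / \<Phi> y) at_top"
    using ev
  proof eventually_elim
    case (elim y)
    have Py: "\<Phi> y > 0" using Phi_pos y0 elim by simp
    have "g0 \<le> f1 y * \<Phi> y powr (\<theta> - 1)" unfolding g0_def using g_mono y0 elim by simp
    then have "ln g0 \<le> ln (f1 y * \<Phi> y powr (\<theta> - 1))" using g0 by simp
    also have "\<dots> = ln (f1 y) + (\<theta> - 1) * ln (\<Phi> y)"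
      using Py f1_pos[of y] y0 elim by (simp add: ln_mult ln_powr)
    finally show ?case using Py by (simp add: divide_right_mono)
  qed
  have l1: "((\<lambda>y. ln (f1 y0) / \<Phi> y) \<longlongrightarrow> 0) at_top"
    by (rule tendsto_divide_0[OF tendsto_const filterlim_at_top_imp_at_infinity[OF tendsto_top]])
  have lx: "((\<lambda>x. ln g0 * (1 / x) - (\<theta> - 1) * (ln x / x)) \<longlongrightarrow> ln g0 * 0 - (\<theta> - 1) * 0) at_top"
    by (intro tendsto_intros ln_x_over_x_tendsto_0 tendsto_divide_0[OF tendsto_const] filterlim_at_top_imp_at_infinity[OF filterlim_ident])
  have l2: "((\<lambda>y. (ln g0 - (\<theta> - 1) * ln (\<Phi> y)) / \<Phi> y) \<longlongrightarrow> 0) at_top"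
    using filterlim_compose[OF lx tendsto_top] by (simp add: diff_divide_distrib)
  show ?thesis by (rule tendsto_sandwich[OF lo up l2 l1])
qed


lemma R_tendsto:
  "((\<lambda>y. J_of (mu_Phi \<Phi>) (F (- y)) / (F (- y) * rderiv \<Phi> (Phi_inv \<Phi> (ln (1 / F (- y)))))) \<longlongrightarrow> 1) at_top"
proof -
  define tt where "tt y = F (- y)" for y
  define VV where "VV y = ln (1 / tt y)" for y
  define vv where "vv y = Phi_inv \<Phi> (VV y)" for y
  define kk where "kk y = (\<theta> - 1) / \<Phi> y" for y
  define ww where "ww y = (VV y / \<Phi> y) powr (\<theta> - 1)" for y
  define R where "R y = J_of (mu_Phi \<Phi>) (tt y) / (tt y * rderiv \<Phi> (vv y))" for y
  define Z where "Z = Z_Phi \<Phi>"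
  have Z: "Z > 0" using Z_pos by (simp add: Z_def)
  define b where "b = a + 1"
  have b: "a < b" "0 < b" using a_pos by (auto simp: b_def)
  define good where "good y \<longleftrightarrow> b < y \<and> kk y < 1/2 \<and> tt y < exp (- \<Phi> b)" for y
  have e2: "eventually (\<lambda>y. kk y < 1/2) at_top"
    using order_tendstoD(2)[OF kk_tendsto, of "1/2"] unfolding kk_def by simp
  have e3: "eventually (\<lambda>y. tt y < exp (- \<Phi> b)) at_top"
    using order_tendstoD(2)[OF tt_tendsto, of "exp (- \<Phi> b)"] unfolding tt_def by simp
  have eg: "eventually good at_top"
    using eventually_gt_at_top[of b] e2 e3 unfolding good_def by eventually_elim auto
  have key: "(1 - kk y) * min 1 (ww y) \<le> R y \<and> R y \<le> max 1 (ww y)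
      \<and> 1 + (ln (1 - kk y) + ln (f1 y) + ln Z) / \<Phi> y \<le> VV y / \<Phi> y
      \<and> VV y / \<Phi> y \<le> 1 + (ln (f1 y) + ln Z) / \<Phi> y" if g: "good y" for y
  proof -
    have y: "a < y" "b < y" and k: "kk y < 1/2" and tsmall: "tt y < exp (- \<Phi> b)"
      using g b unfolding good_def by auto
    define U where "U = \<Phi> y"
    define c where "c = f1 y"
    define \<kappa> where "\<kappa> = kk y"
    have U: "U > 0" using Phi_pos[OF y(1)] by (simp add: U_def)
    have c: "c > 0" using f1_pos[OF y(1)] by (simp add: c_def)
    have ka: "0 \<le> \<kappa>" "\<kappa> < 1/2" using th U k by (auto simp: \<kappa>_def kk_def U_def)
    have "kk y < 1" using k by simp
    then have k1: "(\<theta> - 1) / \<Phi> y < 1" unfolding kk_def .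
    have tm: "tt y = measure (mu_Phi \<Phi>) {y..}" by (simp add: tt_def cdf_neg_meas)
    have tlo: "exp (- U) / (c * Z) \<le> tt y"
      using tail_bounds(1)[OF y(1) k1] tm by (simp add: U_def c_def Z_def)
    have thi: "tt y \<le> exp (- U) / ((1 - \<kappa>) * c * Z)"
      using tail_bounds(2)[OF y(1) k1] tm by (simp add: U_def c_def Z_def \<kappa>_def kk_def)
    have tpos: "0 < tt y" "tt y < 1" using cdf_range by (auto simp: tt_def)
    have lnt: "ln (tt y) < - \<Phi> b"
    proof -
      have "ln (tt y) < ln (exp (- \<Phi> b))" using tsmall tpos by (subst ln_less_cancel_iff) auto
      then show ?thesis by simp
    qed
    have VVe: "VV y = - ln (tt y)" using tpos by (simp add: VV_def ln_div)
    have Vb: "\<Phi> b < VV y" using lnt VVe by simp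
    note vp = Phi_inv_props[OF b(2) Vb]
    have bv: "b < vv y" and Pv: "\<Phi> (vv y) = VV y" using vp by (auto simp: vv_def)
    have av: "a < vv y" using bv b by simp
    have V: "VV y > 0" using Vb Phi_pos[OF b(1)] by simp
    have J: "J_of (mu_Phi \<Phi>) (tt y) = exp (- U) / Z"
    proof -
      have inv: "inv_into UNIV F (tt y) = - y" unfolding tt_def by (rule inv_cdf)
      have "isCont (\<lambda>s. exp (- \<Phi> \<bar>s\<bar>)) (inv_into UNIV F (tt y))" unfolding inv using y b by (intro isCont_E) simp
      from J_eq[OF tpos this] show ?thesis unfolding inv using y b by (simp add: U_def Z_def)
    qed
    have rd: "rderiv \<Phi> (vv y) = f1 (vv y)"
      by (rule rderiv_eq) (rule has_field_derivative_at_within[OF d1[OF av]])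
    define fv where "fv = f1 (vv y)"
    have fv: "fv > 0" using f1_pos[OF av] by (simp add: fv_def)
    define Aq where "Aq = (exp (- U) / Z) / (tt y * c)"
    define B where "B = c / fv"
    have RAB: "R y = Aq * B"
      unfolding R_def J rd Aq_def B_def fv_def[symmetric] using c fv tpos by (simp add: field_simps)
    have Aq1: "Aq \<le> 1"
    proof -
      have pos: "0 < tt y * c * Z" using tpos c Z by simp
      have "exp (- U) \<le> tt y * (c * Z)" using tlo pos_divide_le_eq[of "c * Z"] c Z by simp
      then show ?thesis unfolding Aq_def using pos by (simp add: divide_le_eq mult_ac)
    qed
    have Aq0: "1 - \<kappa> \<le> Aq"
    proof -
      have pos: "0 < tt y * c * Z" using tpos c Z by simp
      have pk: "0 < (1 - \<kappa>) * c * Z" using ka c Z by simp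
      have "tt y * ((1 - \<kappa>) * c * Z) \<le> exp (- U)" using thi pos_le_divide_eq[OF pk] by simp
      then have "(1 - \<kappa>) * (tt y * c * Z) \<le> exp (- U)" by (simp add: mult_ac)
      then show ?thesis unfolding Aq_def using pos by (simp add: le_divide_eq mult_ac)
    qed
    define p where "p = \<theta> - 1"
    have w: "ww y = VV y powr p / U powr p"
      unfolding ww_def p_def U_def using V U by (simp add: powr_divide U_def)
    have Upp: "U powr p > 0" "VV y powr p > 0" using U V by auto
    have Bb: "min 1 (ww y) \<le> B \<and> B \<le> max 1 (ww y)"
    proof (cases "y \<le> vv y")
      case True
      have "fv \<le> c" using f1_antimono[OF y(1) True] by (simp add: fv_def c_def)
      then have B1: "1 \<le> B" using fv by (simp add: B_def)
      have "c * U powr p \<le> fv * VV y powr p" using g_mono[OF y(1) True] Pv by (simp add: c_def fv_def U_def p_def)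
      then have "B \<le> ww y" unfolding B_def w using fv Upp by (simp add: field_simps)
      then show ?thesis using B1 by simp
    next
      case False
      then have vy: "vv y \<le> y" by simp
      have "c \<le> fv" using f1_antimono[OF av vy] by (simp add: fv_def c_def)
      then have B1: "B \<le> 1" using fv by (simp add: B_def)
      have "fv * VV y powr p \<le> c * U powr p" using g_mono[OF av vy] Pv by (simp add: c_def fv_def U_def p_def)
      then have "ww y \<le> B" unfolding B_def w using fv Upp by (simp add: field_simps)
      then show ?thesis using B1 by simp
    qed
    have B0: "0 \<le> B" using c fv by (simp add: B_def)
    have w0: "0 \<le> ww y" by (simp add: ww_def)
    have P2: "R y \<le> max 1 (ww y)"
    proof -
      have "Aq * B \<le> 1 * B" using Aq1 B0 by (intro mult_right_mono) auto
      then show ?thesis using Bb RAB by simp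
    qed
    have P1: "(1 - kk y) * min 1 (ww y) \<le> R y"
    proof -
      have "(1 - \<kappa>) * min 1 (ww y) \<le> Aq * B"
        using Aq0 Bb ka w0 by (intro mult_mono) auto
      then show ?thesis using RAB by (simp add: \<kappa>_def)
    qed
    have lnhi: "ln (tt y) \<le> - U - ln (1 - \<kappa>) - ln c - ln Z"
    proof -
      have "ln (tt y) \<le> ln (exp (- U) / ((1 - \<kappa>) * c * Z))"
        using thi tpos by (subst ln_le_cancel_iff) auto
      also have "\<dots> = - U - ln (1 - \<kappa>) - ln c - ln Z"
        using ka c Z by (simp add: ln_div ln_mult)
      finally show ?thesis .
    qed
    have lnlo: "- U - ln c - ln Z \<le> ln (tt y)"
    proof -
      have "ln (exp (- U) / (c * Z)) \<le> ln (tt y)"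
        using tlo tpos c Z by (subst ln_le_cancel_iff) auto
      moreover have "ln (exp (- U) / (c * Z)) = - U - ln c - ln Z"
        using c Z by (simp add: ln_div ln_mult)
      ultimately show ?thesis by simp
    qed
    have P3: "1 + (ln (1 - kk y) + ln (f1 y) + ln Z) / \<Phi> y \<le> VV y / \<Phi> y"
    proof -
      have "U + (ln (1 - \<kappa>) + ln c + ln Z) \<le> VV y" using lnhi VVe by simp
      then have "(U + (ln (1 - \<kappa>) + ln c + ln Z)) / U \<le> VV y / U" using U by (simp add: divide_right_mono)
      then show ?thesis using U by (simp add: add_divide_distrib U_def c_def \<kappa>_def)
    qed
    have P4: "VV y / \<Phi> y \<le> 1 + (ln (f1 y) + ln Z) / \<Phi> y"
    proof -
      have "VV y \<le> U + (ln c + ln Z)" using lnlo VVe by simp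
      then have "VV y / U \<le> (U + (ln c + ln Z)) / U" using U by (simp add: divide_right_mono)
      then show ?thesis using U by (simp add: add_divide_distrib U_def c_def)
    qed
    show ?thesis using P1 P2 P3 P4 by simp
  qed
  have inf: "filterlim \<Phi> at_infinity at_top" by (rule filterlim_at_top_imp_at_infinity[OF tendsto_top])
  have lk: "(kk \<longlongrightarrow> 0) at_top" unfolding kk_def by (rule kk_tendsto)
  have lln: "((\<lambda>y. ln (1 - kk y)) \<longlongrightarrow> 0) at_top"
    using tendsto_ln[OF tendsto_diff[OF tendsto_const lk, of 1]] by simp
  have lo3: "((\<lambda>y. 1 + (ln (1 - kk y) + ln (f1 y) + ln Z) / \<Phi> y) \<longlongrightarrow> 1) at_top"
  proof -
    have "((\<lambda>y. 1 + (ln (1 - kk y) / \<Phi> y + ln (f1 y) / \<Phi> y + ln Z / \<Phi> y)) \<longlongrightarrow> 1 + (0 + 0 + 0)) at_top"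
      by (intro tendsto_intros tendsto_divide_0[OF lln inf] lnf1_tendsto tendsto_divide_0[OF tendsto_const inf])
    then show ?thesis by (simp add: add_divide_distrib)
  qed
  have hi4: "((\<lambda>y. 1 + (ln (f1 y) + ln Z) / \<Phi> y) \<longlongrightarrow> 1) at_top"
  proof -
    have "((\<lambda>y. 1 + (ln (f1 y) / \<Phi> y + ln Z / \<Phi> y)) \<longlongrightarrow> 1 + (0 + 0)) at_top"
      by (intro tendsto_intros lnf1_tendsto tendsto_divide_0[OF tendsto_const inf])
    then show ?thesis by (simp add: add_divide_distrib)
  qed
  have lV: "((\<lambda>y. VV y / \<Phi> y) \<longlongrightarrow> 1) at_top"
    by (rule tendsto_sandwich[OF eventually_mono[OF eg] eventually_mono[OF eg] lo3 hi4]) (use key in blast)+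
  have lw: "(ww \<longlongrightarrow> 1) at_top"
    using tendsto_powr[OF lV tendsto_const[of "\<theta> - 1"]] unfolding ww_def by simp
  have lRlo: "((\<lambda>y. (1 - kk y) * min 1 (ww y)) \<longlongrightarrow> 1) at_top"
    using tendsto_mult[OF tendsto_diff[OF tendsto_const lk] tendsto_min[OF tendsto_const lw], of 1 1] by simp
  have lRhi: "((\<lambda>y. max 1 (ww y)) \<longlongrightarrow> 1) at_top"
    using tendsto_max[OF tendsto_const lw, of 1] by simp
  have "(R \<longlongrightarrow> 1) at_top"
    by (rule tendsto_sandwich[OF eventually_mono[OF eg] eventually_mono[OF eg] lRlo lRhi]) (use key in blast)+
  then show ?thesis unfolding R_def tt_def vv_def VV_def .
qed


lemma part1:
  "((\<lambda>t. J_of (mu_Phi \<Phi>) t / (t * rderiv \<Phi> (Phi_inv \<Phi> (ln (1 / t))))) \<longlongrightarrow> 1) (at_right 0)"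
proof -
  let ?h = "\<lambda>t. - inv_into UNIV F t"
  have hlim: "filterlim ?h at_top (at_right 0)"
    unfolding filterlim_at_top
  proof
    fix M :: real
    have FM: "F (- M) > 0" by (rule cdf_range)
    show "eventually (\<lambda>t. M \<le> ?h t) (at_right 0)"
      unfolding eventually_at_right_field
    proof (intro exI[of _ "min (F (- M)) 1"] conjI allI impI)
      show "(0::real) < min (F (- M)) 1" using FM by simp
      fix t :: real assume t: "0 < t" "t < min (F (- M)) 1"
      then have Ft: "F (inv_into UNIV F t) = t" by (intro cdf_inv) auto
      show "M \<le> ?h t"
      proof (rule ccontr)
        assume "\<not> M \<le> ?h t"
        then have "- M < inv_into UNIV F t" by simp
        then have "F (- M) < F (inv_into UNIV F t)" by (rule cdf_strict)
        then show False using Ft t by simp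
      qed
    qed
  qed
  have lim: "((\<lambda>t. J_of (mu_Phi \<Phi>) (F (- ?h t)) / (F (- ?h t) * rderiv \<Phi> (Phi_inv \<Phi> (ln (1 / F (- ?h t)))))) \<longlongrightarrow> 1) (at_right 0)"
    using filterlim_compose[OF R_tendsto hlim] by simp
  have ev: "eventually (\<lambda>t. J_of (mu_Phi \<Phi>) (F (- ?h t)) / (F (- ?h t) * rderiv \<Phi> (Phi_inv \<Phi> (ln (1 / F (- ?h t)))))
      = J_of (mu_Phi \<Phi>) t / (t * rderiv \<Phi> (Phi_inv \<Phi> (ln (1 / t))))) (at_right 0)"
    unfolding eventually_at_right_field
    by (intro exI[of _ 1]) (auto simp: cdf_inv)
  show ?thesis using tendsto_cong[OF ev] lim by simp
qed


lemma ln2_le: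
  fixes m :: real assumes "0 < m" "m \<le> 1/2" shows "ln 2 \<le> ln (1 / m)"
proof -
  have "1 / (1/2) \<le> 1 / m" using assms by (intro divide_left_mono) auto
  then show ?thesis using assms by (subst ln_le_cancel_iff) auto
qed

lemma eta_exists:
  assumes P0: "\<Phi> 0 < ln 2" and rc: "continuous (at_right 0) \<Phi>"
  shows "\<exists>\<eta>>0. \<Phi> \<eta> < ln 2"
proof -
  have "(\<Phi> \<longlongrightarrow> \<Phi> 0) (at_right 0)" using rc by (simp add: continuous_within)
  from order_tendstoD(2)[OF this P0]
  obtain b :: real where b: "b > 0" "\<And>w. 0 < w \<Longrightarrow> w < b \<Longrightarrow> \<Phi> w < ln 2"
    unfolding eventually_at_right_field by auto
  show ?thesis using b by (intro exI[of _ "b / 2"]) auto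
qed

lemma isCont_E_all:
  assumes rc: "continuous (at_right 0) \<Phi>"
  shows "isCont (\<lambda>s. exp (- \<Phi> \<bar>s\<bar>)) x"
proof (cases "x = 0")
  case True
  have lim: "(\<Phi> \<longlongrightarrow> \<Phi> 0) (at_right 0)" using rc by (simp add: continuous_within)
  have "isCont (\<lambda>s. \<Phi> \<bar>s\<bar>) 0"
    unfolding continuous_at_eps_delta
  proof (intro allI impI)
    fix e :: real assume e: "e > 0"
    from order_tendstoD(2)[OF lim, of "\<Phi> 0 + e"] e
    obtain b :: real where b: "b > 0" "\<And>w. 0 < w \<Longrightarrow> w < b \<Longrightarrow> \<Phi> w < \<Phi> 0 + e"
      unfolding eventually_at_right_field by auto
    show "\<exists>d>0. \<forall>x'. dist x' 0 < d \<longrightarrow> dist (\<Phi> \<bar>x'\<bar>) (\<Phi> \<bar>0\<bar>) < e"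
    proof (intro exI[of _ b] conjI allI impI)
      fix x' :: real assume "dist x' 0 < b"
      then have x': "\<bar>x'\<bar> < b" by simp
      show "dist (\<Phi> \<bar>x'\<bar>) (\<Phi> \<bar>0\<bar>) < e"
      proof (cases "x' = 0")
        case False
        then have "\<Phi> \<bar>x'\<bar> < \<Phi> 0 + e" using b x' by simp
        moreover have "\<Phi> 0 \<le> \<Phi> \<bar>x'\<bar>" using monoD[of 0 "\<bar>x'\<bar>"] by simp
        ultimately show ?thesis by (simp add: dist_real_def)
      qed (use e in simp)
    qed (use b in simp)
  qed
  then show ?thesis using True by (intro continuous_intros) simp
qed (rule isCont_E)

lemma part2a:
  assumes eta: "0 < \<eta>" "\<Phi> \<eta> < ln 2" and t: "t \<in> {0<..<1}"
  shows "ln (1 / min t (1 - t)) \<in> \<Phi> ` {0..}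
     \<and> (\<exists>D. (\<Phi> has_real_derivative D) (at_right (Phi_inv \<Phi> (ln (1 / min t (1 - t))))))"
proof -
  have m: "0 < min t (1 - t)" "min t (1 - t) \<le> 1 / 2" using t by (auto simp: min_def)
  have "ln 2 \<le> ln (1 / min t (1 - t))" using m by (rule ln2_le)
  then have V: "\<Phi> \<eta> < ln (1 / min t (1 - t))" using eta by simp
  note p = Phi_inv_props[OF eta(1) V]
  show ?thesis using p(1) rderiv_exists[of "Phi_inv \<Phi> (ln (1 / min t (1 - t)))"] p(2) eta by auto
qed

end

context phi_tail
begin

lemma part2b:
  assumes P0: "\<Phi> 0 < ln 2" and rc: "continuous (at_right 0) \<Phi>"
  shows "\<exists>k1 k2. k1 > 0 \<and> k2 > 0 \<and> (\<forall>t\<in>{0..1}.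
            k1 * L_Phi \<Phi> t \<le> J_of (mu_Phi \<Phi>) t \<and> J_of (mu_Phi \<Phi>) t \<le> k2 * L_Phi \<Phi> t)"
proof -
  obtain \<eta> where eta: "0 < \<eta>" "\<Phi> \<eta> < ln 2" using eta_exists[OF P0 rc] by blast
  define Z where "Z = Z_Phi \<Phi>"
  have Z: "Z > 0" using Z_pos by (simp add: Z_def)
  let ?inv = "inv_into UNIV F"
  have Jt: "J_of (mu_Phi \<Phi>) t = exp (- \<Phi> \<bar>?inv t\<bar>) / Z" if "0 < t" "t < 1" for t
    using J_eq[OF that isCont_E_all[OF rc]] by (simp add: Z_def)
  have F0: "F 0 = 1 / 2" using cdf_neg[of 0] by simp
  have Dinfo: "\<exists>v D. \<eta> < v \<and> \<Phi> v = ln (1 / t) \<and> (\<Phi> has_real_derivative D) (at_right v)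
      \<and> L_Phi \<Phi> t = t * D" if t: "0 < t" "t \<le> 1/2" for t
  proof -
    have mt: "min t (1 - t) = t" using t by simp
    have "ln 2 \<le> ln (1 / t)" using t by (intro ln2_le) auto
    then have V: "\<Phi> \<eta> < ln (1 / t)" using eta by simp
    note p = Phi_inv_props[OF eta(1) V]
    obtain D where D: "(\<Phi> has_real_derivative D) (at_right (Phi_inv \<Phi> (ln (1 / t))))"
      using rderiv_exists[of "Phi_inv \<Phi> (ln (1 / t))"] p(2) eta by auto
    show ?thesis
      using p(2,3) D rderiv_eq[OF D] by (intro exI[of _ "Phi_inv \<Phi> (ln (1 / t))"] exI[of _ D]) (simp add: L_Phi_def mt)
  qed
  have Lpos: "L_Phi \<Phi> t > 0" if t: "0 < t" "t \<le> 1/2" for t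
  proof -
    obtain v D where vD: "\<eta> < v" "\<Phi> v = ln (1 / t)" "(\<Phi> has_real_derivative D) (at_right v)" "L_Phi \<Phi> t = t * D"
      using Dinfo[OF t] by blast
    obtain W where W: "W \<ge> 0" "\<Phi> v < \<Phi> W" using unbounded by blast
    have vW: "v < W"
    proof (rule ccontr)
      assume "\<not> v < W" then have "\<Phi> W \<le> \<Phi> v" using monoD W(1) by simp
      then show False using W by simp
    qed
    have "(\<Phi> W - \<Phi> v) / (W - v) \<le> D" using rderiv_bounds(1)[OF vD(3), of 0 W] vD eta vW by simp
    moreover have "(\<Phi> W - \<Phi> v) / (W - v) > 0" using W vW by simp
    ultimately show ?thesis using vD t by simp
  qed
  have "eventually (\<lambda>t. 1/2 < J_of (mu_Phi \<Phi>) t / (t * rderiv \<Phi> (Phi_inv \<Phi> (ln (1 / t))))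
      \<and> J_of (mu_Phi \<Phi>) t / (t * rderiv \<Phi> (Phi_inv \<Phi> (ln (1 / t)))) < 2) (at_right 0)"
  proof -
    have e1: "eventually (\<lambda>t. 1/2 < J_of (mu_Phi \<Phi>) t / (t * rderiv \<Phi> (Phi_inv \<Phi> (ln (1 / t))))) (at_right 0)"
      by (rule order_tendstoD(1)[OF part1]) simp
    have e2: "eventually (\<lambda>t. J_of (mu_Phi \<Phi>) t / (t * rderiv \<Phi> (Phi_inv \<Phi> (ln (1 / t)))) < 2) (at_right 0)"
      by (rule order_tendstoD(2)[OF part1]) simp
    show ?thesis using e1 e2 by eventually_elim auto
  qed
  then obtain d0 :: real where d0: "d0 > 0" "\<And>t. 0 < t \<Longrightarrow> t < d0 \<Longrightarrow>
      1/2 < J_of (mu_Phi \<Phi>) t / (t * rderiv \<Phi> (Phi_inv \<Phi> (ln (1 / t))))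
      \<and> J_of (mu_Phi \<Phi>) t / (t * rderiv \<Phi> (Phi_inv \<Phi> (ln (1 / t)))) < 2"
    unfolding eventually_at_right_field by auto
  define \<delta> where "\<delta> = min d0 (1/2)"
  have \<delta>: "0 < \<delta>" "\<delta> \<le> 1/2" "\<delta> \<le> d0" using d0 by (auto simp: \<delta>_def)
  have small: "(1/2) * L_Phi \<Phi> t \<le> J_of (mu_Phi \<Phi>) t \<and> J_of (mu_Phi \<Phi>) t \<le> 2 * L_Phi \<Phi> t"
    if t: "0 < t" "t < \<delta>" for t
  proof -
    have t2: "t \<le> 1/2" using t \<delta> by simp
    have eqL: "L_Phi \<Phi> t = t * rderiv \<Phi> (Phi_inv \<Phi> (ln (1 / t)))" using t2 t by (simp add: L_Phi_def)
    have L: "L_Phi \<Phi> t > 0" by (rule Lpos) (use t t2 in auto)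
    have r: "1/2 < J_of (mu_Phi \<Phi>) t / L_Phi \<Phi> t" "J_of (mu_Phi \<Phi>) t / L_Phi \<Phi> t < 2"
      using d0(2)[of t] t \<delta> unfolding eqL by auto
    show ?thesis using r L by (simp add: field_simps)
  qed
  define M where "M = - ?inv \<delta>"
  have inv_mono: "?inv s \<le> ?inv t" if "0 < s" "s \<le> t" "t < 1" for s t
  proof (rule ccontr)
    assume "\<not> ?inv s \<le> ?inv t"
    then have "F (?inv t) < F (?inv s)" by (intro cdf_strict) simp
    then show False using that cdf_inv[of s] cdf_inv[of t] by simp
  qed
  have inv_half: "?inv t \<le> 0" if "0 < t" "t \<le> 1/2" for t
  proof (rule ccontr)
    assume "\<not> ?inv t \<le> 0"
    then have "F 0 < F (?inv t)" by (intro cdf_strict) simp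
    then show False using that cdf_inv[of t] F0 by simp
  qed
  define j1 where "j1 = exp (- \<Phi> M) / Z"
  define j2 where "j2 = exp (- \<Phi> 0) / Z"
  have j1: "j1 > 0" using Z by (simp add: j1_def)
  have Jlo: "j1 \<le> J_of (mu_Phi \<Phi>) t" if t: "\<delta> \<le> t" "t \<le> 1/2" for t
  proof -
    have "?inv \<delta> \<le> ?inv t" using inv_mono[of \<delta> t] t \<delta> by simp
    moreover have "?inv t \<le> 0" using inv_half[of t] t \<delta> by simp
    ultimately have "\<bar>?inv t\<bar> \<le> M" by (simp add: M_def)
    then have "\<Phi> \<bar>?inv t\<bar> \<le> \<Phi> M" using monoD by simp
    then show ?thesis using Jt[of t] t \<delta> Z by (simp add: j1_def divide_right_mono)
  qed
  have Jhi: "J_of (mu_Phi \<Phi>) t \<le> j2" if t: "0 < t" "t < 1" for t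
    using Jt[OF t] E_le Z by (simp add: j2_def divide_right_mono)
  obtain W where W: "W \<ge> 0" "ln (1 / \<delta>) + 1 < \<Phi> W" using unbounded by blast
  have Wpos: "W > 0"
  proof -
    have "ln 2 \<le> ln (1 / \<delta>)" using \<delta> by (intro ln2_le) auto
    then have "\<Phi> 0 < \<Phi> W" using W P0 by simp
    then show ?thesis using W(1) by (cases "W = 0") auto
  qed
  have Cpos: "ln (1 / \<delta>) - \<Phi> 0 > 0"
  proof -
    have "ln 2 \<le> ln (1 / \<delta>)" using \<delta> by (intro ln2_le) auto
    then show ?thesis using P0 by simp
  qed
  define l1 where "l1 = \<delta> / W"
  define C where "C = (ln (1 / \<delta>) - \<Phi> 0) / \<eta>"
  define l2 where "l2 = C / 2"
  have l1: "l1 > 0" using \<delta> Wpos by (simp add: l1_def)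
  have l2: "l2 > 0" using Cpos eta by (simp add: l2_def C_def)
  have j2: "j2 > 0" using Z by (simp add: j2_def)
  have Lmid: "l1 \<le> L_Phi \<Phi> t \<and> L_Phi \<Phi> t \<le> l2" if t: "\<delta> \<le> t" "t \<le> 1/2" for t
  proof -
    have t0: "0 < t" using t \<delta> by simp
    obtain v D where vD: "\<eta> < v" "\<Phi> v = ln (1 / t)" "(\<Phi> has_real_derivative D) (at_right v)" "L_Phi \<Phi> t = t * D"
      using Dinfo[OF t0 t(2)] by blast
    have "1 / t \<le> 1 / \<delta>" using t \<delta> by (intro divide_left_mono) auto
    then have Vle: "ln (1 / t) \<le> ln (1 / \<delta>)" using t0 \<delta> by (subst ln_le_cancel_iff) auto
    have vW: "v < W"
    proof (rule ccontr)
      assume "\<not> v < W" then have "\<Phi> W \<le> \<Phi> v" using monoD W(1) by simp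
      then show False using W vD Vle by simp
    qed
    have v0: "0 < v" using vD eta by simp
    have "(\<Phi> W - \<Phi> v) / (W - v) \<le> D" using rderiv_bounds(1)[OF vD(3), of 0 W] vD eta vW by simp
    moreover have "1 / W \<le> (\<Phi> W - \<Phi> v) / (W - v)"
    proof -
      have "1 / W \<le> 1 / (W - v)" using vW v0 by (simp add: frac_le)
      also have "\<dots> \<le> (\<Phi> W - \<Phi> v) / (W - v)" using W vD Vle vW by (simp add: divide_right_mono)
      finally show ?thesis .
    qed
    ultimately have D1: "1 / W \<le> D" by simp
    have "D \<le> (\<Phi> v - \<Phi> 0) / (v - 0)" using rderiv_bounds(2)[OF vD(3), of 0] v0 by simp
    also have "\<dots> \<le> (\<Phi> v - \<Phi> 0) / \<eta>"
      using vD(1) eta monoD[of 0 v] v0 by (intro divide_left_mono) auto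
    also have "\<dots> \<le> C" unfolding C_def using vD Vle eta by (intro divide_right_mono) auto
    finally have D2: "D \<le> C" .
    have "l1 \<le> t * D"
    proof -
      have "\<delta> * (1 / W) \<le> t * D" using t D1 \<delta> W vW v0 by (intro mult_mono) auto
      then show ?thesis by (simp add: l1_def)
    qed
    moreover have "t * D \<le> (1/2) * C"
    proof -
      have "0 < 1 / W" using Wpos by simp
      then have "0 \<le> D" using D1 by linarith
      then show ?thesis using t D2 by (intro mult_mono) auto
    qed
    ultimately show ?thesis using vD by (simp add: l2_def)
  qed
  have Jsym: "J_of (mu_Phi \<Phi>) (1 - t) = J_of (mu_Phi \<Phi>) t" if t: "0 < t" "t < 1" for t
  proof -
    have "F (- ?inv t) = 1 - t" using cdf_neg[of "?inv t"] cdf_inv[OF t] by simp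
    then have "?inv (1 - t) = - ?inv t" using inv_cdf[of "- ?inv t"] by simp
    then show ?thesis using Jt[of t] Jt[of "1 - t"] t by simp
  qed
  have Lsym: "L_Phi \<Phi> (1 - t) = L_Phi \<Phi> t" for t
    by (simp add: L_Phi_def min.commute)
  define k1 where "k1 = min (1/2) (j1 / l2)"
  define k2 where "k2 = max 2 (j2 / l1)"
  have half: "k1 * L_Phi \<Phi> t \<le> J_of (mu_Phi \<Phi>) t \<and> J_of (mu_Phi \<Phi>) t \<le> k2 * L_Phi \<Phi> t"
    if t: "0 < t" "t \<le> 1/2" for t
  proof -
    have L: "L_Phi \<Phi> t > 0" using Lpos[OF t] .
    show ?thesis
    proof (cases "t < \<delta>")
      case True
      note sm = small[OF t(1) True]
      have "k1 \<le> 1/2" unfolding k1_def by (rule min.cobounded1)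
      then have "k1 * L_Phi \<Phi> t \<le> (1/2) * L_Phi \<Phi> t" using L by (intro mult_right_mono) auto
      moreover have "2 \<le> k2" unfolding k2_def by (rule max.cobounded1)
      then have "2 * L_Phi \<Phi> t \<le> k2 * L_Phi \<Phi> t" using L by (intro mult_right_mono) auto
      ultimately show ?thesis using sm by linarith
    next
      case False
      then have td: "\<delta> \<le> t" by simp
      note lm = Lmid[OF td t(2)]
      have "k1 \<le> j1 / l2" unfolding k1_def by (rule min.cobounded2)
      then have "k1 * L_Phi \<Phi> t \<le> (j1 / l2) * L_Phi \<Phi> t" using L by (intro mult_right_mono) auto
      also have "\<dots> \<le> (j1 / l2) * l2" using lm j1 l2 by (intro mult_left_mono) auto
      also have "\<dots> = j1" using l2 by simp
      also have "\<dots> \<le> J_of (mu_Phi \<Phi>) t" by (rule Jlo[OF td t(2)])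
      finally have A: "k1 * L_Phi \<Phi> t \<le> J_of (mu_Phi \<Phi>) t" .
      have "J_of (mu_Phi \<Phi>) t \<le> j2" using Jhi[of t] t by simp
      also have "\<dots> = (j2 / l1) * l1" using l1 by simp
      also have "\<dots> \<le> (j2 / l1) * L_Phi \<Phi> t" using lm j2 l1 by (intro mult_left_mono) auto
      also have "\<dots> \<le> k2 * L_Phi \<Phi> t" using L max.cobounded2[of "j2 / l1" 2] by (intro mult_right_mono) (auto simp: k2_def)
      finally show ?thesis using A by simp
    qed
  qed
  have k1: "k1 > 0" using j1 l2 by (simp add: k1_def)
  have k2: "k2 > 0" by (simp add: k2_def)
  have all: "\<forall>t\<in>{0..1}. k1 * L_Phi \<Phi> t \<le> J_of (mu_Phi \<Phi>) t \<and> J_of (mu_Phi \<Phi>) t \<le> k2 * L_Phi \<Phi> t"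
  proof
    fix t :: real assume "t \<in> {0..1}"
    then have t: "0 \<le> t" "t \<le> 1" by auto
    show "k1 * L_Phi \<Phi> t \<le> J_of (mu_Phi \<Phi>) t \<and> J_of (mu_Phi \<Phi>) t \<le> k2 * L_Phi \<Phi> t"
    proof (cases "t = 0 \<or> t = 1")
      case True
      then show ?thesis by (auto simp: J_of_def L_Phi_def)
    next
      case False
      then have t': "0 < t" "t < 1" using t by auto
      show ?thesis
      proof (cases "t \<le> 1/2")
        case True
        then show ?thesis using half t' by simp
      next
        case False
        then have "0 < 1 - t" "1 - t \<le> 1/2" using t' by auto
        from half[OF this] Jsym[of "1 - t"] Lsym[of "1 - t"] t' show ?thesis by simp
      qed
    qed
  qed
  show ?thesis using k1 k2 all by blast
qed

end

theorem mainTheorem16: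
  fixes \<Phi> :: "real \<Rightarrow> real"
  assumes mono: "mono_on {0..} \<Phi>"
    and concave: "concave_on {0..} \<Phi>"
    and sublin: "((\<lambda>x. \<Phi> x / x) \<longlongrightarrow> 0) at_top"
    and integr: "integrable lborel (\<lambda>x. exp (- \<Phi> \<bar>x\<bar>))"
    and nbhd: "\<exists>a. C2_on {a<..} \<Phi> \<and> (\<exists>\<theta>>1. convex_on {a<..} (\<lambda>x. \<Phi> x powr \<theta>))"
  shows "((\<lambda>t. J_of (mu_Phi \<Phi>) t / (t * rderiv \<Phi> (Phi_inv \<Phi> (ln (1 / t))))) \<longlongrightarrow> 1) (at_right 0)
    \<and> ((\<Phi> 0 < ln 2 \<and> continuous (at_right 0) \<Phi>) \<longrightarrow>
         (\<forall>t\<in>{0<..<1}. ln (1 / min t (1 - t)) \<in> \<Phi> ` {0..}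
            \<and> (\<exists>D. (\<Phi> has_real_derivative D) (at_right (Phi_inv \<Phi> (ln (1 / min t (1 - t)))))))
       \<and> (\<exists>k1 k2. k1 > 0 \<and> k2 > 0 \<and> (\<forall>t\<in>{0..1}.
            k1 * L_Phi \<Phi> t \<le> J_of (mu_Phi \<Phi>) t \<and> J_of (mu_Phi \<Phi>) t \<le> k2 * L_Phi \<Phi> t)))"
proof -
  have pc: "phi_ctx \<Phi>" using mono concave integr by (simp add: phi_ctx_def)
  interpret phi_ctx \<Phi> by (rule pc)
  from nbhd obtain a0 \<theta> where C2: "C2_on {a0<..} \<Phi>" and th: "\<theta> > 1"
    and cv: "convex_on {a0<..} (\<lambda>x. \<Phi> x powr \<theta>)" by blast
  from C2 obtain f1 f2 where D: "\<forall>x\<in>{a0<..}. (\<Phi> has_real_derivative f1 x) (at x) \<and> (f1 has_real_derivative f2 x) (at x)"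
    unfolding C2_on_def by blast
  obtain x0 where x0: "x0 \<ge> 0" "0 < \<Phi> x0" using unbounded[of 0] by blast
  define a where "a = max (max a0 0) x0 + 1"
  have pt: "phi_tail \<Phi> a \<theta> f1"
    unfolding phi_tail_def phi_tail_axioms_def
  proof (intro conjI allI impI pc)
    show "0 < a" by (simp add: a_def)
    show "(\<Phi> has_real_derivative f1 x) (at x)" if "a < x" for x
      using D that by (auto simp: a_def)
    show "continuous_on {a<..} f1"
      using D by (intro continuous_at_imp_continuous_on) (auto simp: a_def intro: DERIV_isCont)
    show "1 < \<theta>" by (rule th)
    show "0 < \<Phi> x" if "a < x" for x
    proof -
      have "x0 \<le> max (max a0 0) x0" by simp
      then have "x0 \<le> x" using that unfolding a_def by linarith
      then show ?thesis using monoD[of x0 x] x0 by simp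
    qed
    show "convex_on {a<..} (\<lambda>x. \<Phi> x powr \<theta>)"
      by (rule convex_on_subset[OF cv]) (auto simp: a_def)
  qed
  interpret phi_tail \<Phi> a \<theta> f1 by (rule pt)
  show ?thesis
  proof (intro conjI impI)
    show "((\<lambda>t. J_of (mu_Phi \<Phi>) t / (t * rderiv \<Phi> (Phi_inv \<Phi> (ln (1 / t))))) \<longlongrightarrow> 1) (at_right 0)"
      by (rule part1)
  next
    assume h: "\<Phi> 0 < ln 2 \<and> continuous (at_right 0) \<Phi>"
    obtain \<eta> where eta: "0 < \<eta>" "\<Phi> \<eta> < ln 2" using eta_exists h by blast
    show "\<forall>t\<in>{0<..<1}. ln (1 / min t (1 - t)) \<in> \<Phi> ` {0..}
            \<and> (\<exists>D. (\<Phi> has_real_derivative D) (at_right (Phi_inv \<Phi> (ln (1 / min t (1 - t))))))"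
      using part2a[OF eta] by blast
    show "\<exists>k1 k2. k1 > 0 \<and> k2 > 0 \<and> (\<forall>t\<in>{0..1}.
            k1 * L_Phi \<Phi> t \<le> J_of (mu_Phi \<Phi>) t \<and> J_of (mu_Phi \<Phi>) t \<le> k2 * L_Phi \<Phi> t)"
      using part2b h by blast
  qed
qed

end
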